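(* Let $F$ be a Bayes-plausible distribution over posteriors (i.e. $F\in\mathcal{F}(\mu)$) with $|\operatorname{supp}(F)|\le n$ and $\operatorname{supp}(F)\subseteq \operatorname{int}\Delta(\Theta)$. Then there exists a contract $(M,t)$ that implements $F$, and the principal's expected cost under this contract is finite.
   Context: Let $\Theta=\{\theta_1,\dots,\theta_n\}$ be a finite set of states and $\mu\in\Delta(\Theta)$ a full-support prior. A belief $\mathbf{x}\in\Delta(\Theta)$ has entries $x^k$ = probability of $\theta_k$. $\mathcal{F}(\mu)$ is the set of Bayes-plausible distributions over posteriors, i.e. Borel probability measures on $\Delta(\Theta)$ with barycenter $\mu$. An agent who acquires $F\in\mathcal{F}(\mu)$ incurs cost $C(F)=\kappa\int c\,dF$, where $\kappa>0$ and $c:\Delta(\Theta)\to\mathbb{R}_+$ is strictly convex, twice continuously differentiable, bounded on the interior of $\Delta(\Theta)$, with $c(\mu)=0$. A contract $(M,t)$ consists of a compact message set $M$ and a transfer $t:M\times\Theta\to\mathbb{R}$ measured in the agent's utils; the agent values money by a strictly increasing, continuously differentiable $v$ with $v(0)=0$, so paying $t$ utils costs the principal $v^{-1}(t)$. The agent has an outside option $v_0\ge 0$. Timing: the principal offers $(M,t)$; the agent rejects (getting $v_0$) or accepts; if she accepts she chooses any $G\in\mathcal{F}(\mu)$, paying $C(G)$, privately observes a posterior $\mathbf{x}$ drawn from $G$, and then either walks away (receiving $v_0$) or sends a message $d\in M$ and receives $t(d,\theta)$ when the state $\theta$ is realized. For $d\in M$, $N(\mathbf{x}\mid d)=\sum_{k=1}^n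 x^k t(d,\theta_k)-\kappa c(\mathbf{x})$. A contract $(M,t)$ implements $F$ if $M=\operatorname{supp}(F)$ and the strategy "accept, acquire $F$, and at each posterior $\mathbf{x}\in\operatorname{supp}(F)$ send the message $\mathbf{x}$" is optimal for the agent among all strategies (rejecting; or accepting, acquiring any $G\in\mathcal{F}(\mu)$, and at each posterior either sending any, possibly randomized, message or walking away). The principal's expected cost of such a contract is $\int \sum_{k=1}^n x^k v^{-1}(t(\mathbf{x},\theta_k))\,dF(\mathbf{x})$. *)

theory Defs
  imports "HOL-Probability.Probability"
begin

text \<open>States are the elements of a finite type 'n (n = CARD('n)); beliefs are vectors
  in real^'n, x $ k being the probability of state k.\<close>

definition beliefs :: "(real^'n::finite) set" where
  "beliefs = {x. (\<forall>k. 0 \<le> x $ k) \<and> (\<Sum>k\<in>UNIV. x $ k) = 1}"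

definition strict_convex_on :: "'a::real_vector set \<Rightarrow> ('a \<Rightarrow> real) \<Rightarrow> bool" where
  "strict_convex_on S f \<longleftrightarrow>
     (\<forall>x\<in>S. \<forall>y\<in>S. x \<noteq> y \<longrightarrow> (\<forall>u::real. 0 < u \<and> u < 1 \<longrightarrow>
        f ((1 - u) *\<^sub>R x + u *\<^sub>R y) < (1 - u) * f x + u * f y))"

definition C2_on :: "(real^'n::finite \<Rightarrow> real) \<Rightarrow> (real^'n) set \<Rightarrow> bool" where
  "C2_on f S \<longleftrightarrow> (\<exists>(g :: real^'n \<Rightarrow> real^'n) (H :: real^'n \<Rightarrow> real^'n^'n).
      (\<forall>x\<in>S. (f has_derivative (\<lambda>h. g x \<bullet> h)) (at x) \<and>
               (g has_derivative (\<lambda>h. H x *v h)) (at x)) \<and> continuous_on S H)"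

definition msupp :: "'a::metric_space measure \<Rightarrow> 'a set" where
  "msupp M = {x \<in> space M. \<forall>e>0. emeasure M (ball x e \<inter> space M) > 0}"

definition bayes_plausible :: "real^'n::finite \<Rightarrow> (real^'n) measure \<Rightarrow> bool" where
  "bayes_plausible \<mu> G \<longleftrightarrow> prob_space G \<and> sets G = sets (restrict_space borel beliefs) \<and>
     (\<forall>k. (\<integral>x. x $ k \<partial>G) = \<mu> $ k)"

definition Npay :: "real \<Rightarrow> (real^'n::finite \<Rightarrow> real) \<Rightarrow> (real^'n \<Rightarrow> 'n \<Rightarrow> real)
     \<Rightarrow> real^'n \<Rightarrow> real^'n \<Rightarrow> real" where
  "Npay \<kappa> c t x d = (\<Sum>k\<in>UNIV. x $ k * t d k) - \<kappa> * c x"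

text \<open>Expected payoff at posterior x of a (possibly randomized) action: None = walk away
  (receiving v0, having paid the information cost), Some d = send message d.\<close>
definition post_payoff :: "real \<Rightarrow> (real^'n::finite \<Rightarrow> real) \<Rightarrow> real \<Rightarrow> (real^'n \<Rightarrow> 'n \<Rightarrow> real)
     \<Rightarrow> (real^'n \<Rightarrow> (real^'n) option pmf) \<Rightarrow> real^'n \<Rightarrow> real" where
  "post_payoff \<kappa> c v0 t \<sigma> x =
     measure_pmf.expectation (\<sigma> x)
       (\<lambda>a. case a of None \<Rightarrow> v0 - \<kappa> * c x | Some d \<Rightarrow> Npay \<kappa> c t x d)"

text \<open>The agent's payoff from the prescribed strategy
  must be at least v0 (rejection) and at least the payoff of any strategy
  "accept, acquire G, act according to sigma".\<close>
definition implements :: "real \<Rightarrow> (real^'n::finite \<Rightarrow> real) \<Rightarrow> real \<Rightarrow> real^'n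
     \<Rightarrow> (real^'n) set \<Rightarrow> (real^'n \<Rightarrow> 'n \<Rightarrow> real) \<Rightarrow> (real^'n) measure \<Rightarrow> bool" where
  "implements \<kappa> c v0 \<mu> M t F \<longleftrightarrow>
     M = msupp F \<and> compact M \<and> bayes_plausible \<mu> F \<and>
     integrable F (\<lambda>x. Npay \<kappa> c t x x) \<and>
     v0 \<le> (\<integral>x. Npay \<kappa> c t x x \<partial>F) \<and>
     (\<forall>G \<sigma>. bayes_plausible \<mu> G \<and>
        (\<forall>x\<in>space G. set_pmf (\<sigma> x) \<subseteq> insert None (Some ` M)) \<and>
        integrable G (post_payoff \<kappa> c v0 t \<sigma>) \<longrightarrow>
        (\<integral>x. post_payoff \<kappa> c v0 t \<sigma> x \<partial>G) \<le> (\<integral>x. Npay \<kappa> c t x x \<partial>F))"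

end

theory Submission imports Defs begin

lemma tangent_ineq:
  fixes c :: "real^'n::finite \<Rightarrow> real"
  assumes sc: "strict_convex_on S c" and x: "x \<in> S" and d: "d \<in> S"
    and der: "(c has_derivative (\<lambda>h. g \<bullet> h)) (at d)"
  shows "c d + g \<bullet> (x - d) \<le> c x"
proof (cases "x = d")
  case True then show ?thesis by simp
next
  case False
  define \<phi> where "\<phi> u = c ((1 - u) *\<^sub>R d + u *\<^sub>R x)" for u :: real
  have p: "((\<lambda>u::real. (1 - u) *\<^sub>R d + u *\<^sub>R x) has_derivative (\<lambda>u. u *\<^sub>R (x - d))) (at 0)"
    by (auto intro!: derivative_eq_intros simp: algebra_simps)
  have der': "(c has_derivative (\<lambda>h. g \<bullet> h)) (at ((\<lambda>u::real. (1 - u) *\<^sub>R d + u *\<^sub>R x) 0))"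
    using der by simp
  have "((c \<circ> (\<lambda>u::real. (1 - u) *\<^sub>R d + u *\<^sub>R x)) has_derivative ((\<lambda>h. g \<bullet> h) \<circ> (\<lambda>u. u *\<^sub>R (x - d)))) (at 0)"
    by (rule diff_chain_at[OF p der'])
  then have "(\<phi> has_derivative (\<lambda>u. (g \<bullet> (x - d)) * u)) (at 0)"
    unfolding \<phi>_def o_def by (simp add: mult.commute)
  then have "(\<phi> has_field_derivative (g \<bullet> (x - d))) (at 0)"
    by (simp add: has_field_derivative_def)
  then have "((\<lambda>y. (\<phi> y - \<phi> 0) / (y - 0)) \<longlongrightarrow> g \<bullet> (x - d)) (at 0)"
    by (simp add: has_field_derivative_iff)
  then have lim: "((\<lambda>y. (\<phi> y - \<phi> 0) / (y - 0)) \<longlongrightarrow> g \<bullet> (x - d)) (at_right 0)"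
    by (rule tendsto_mono[rotated]) (simp add: at_le)
  have ev: "eventually (\<lambda>y. (\<phi> y - \<phi> 0) / (y - 0) \<le> c x - c d) (at_right (0::real))"
    using eventually_at_right_real[OF zero_less_one]
  proof (rule eventually_mono)
    fix y :: real assume y: "y \<in> {0<..<1}"
    have "\<phi> y < (1 - y) * c d + y * c x"
      using sc d x False y unfolding strict_convex_on_def \<phi>_def by auto
    moreover have "\<phi> 0 = c d" by (simp add: \<phi>_def)
    ultimately have "\<phi> y - \<phi> 0 \<le> y * (c x - c d)" by (simp add: algebra_simps)
    then show "(\<phi> y - \<phi> 0) / (y - 0) \<le> c x - c d" using y by (simp add: field_simps)
  qed
  have "g \<bullet> (x - d) \<le> c x - c d"
    by (rule tendsto_upperbound[OF lim ev]) simp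
  then show ?thesis by simp
qed

lemma sum_indicator_single:
  fixes f :: "'a \<Rightarrow> real"
  assumes "finite M"
  shows "(\<Sum>d\<in>M. indicator {d} x * f d) = (if x \<in> M then f x else 0)"
proof -
  have "(\<Sum>d\<in>M. indicator {d} x * f d) = (\<Sum>d\<in>M. if d = x then f d else 0)"
    by (rule sum.cong) (auto simp: indicator_def)
  also have "\<dots> = (if x \<in> M then f x else 0)" using assms by (simp add: sum.delta')
  finally show ?thesis .
qed

lemma lin_sum:
  fixes x g d :: "real^'n::finite"
  assumes "(\<Sum>k\<in>UNIV. x $ k) = 1"
  shows "(\<Sum>k\<in>UNIV. x $ k * (g $ k - g \<bullet> d)) = g \<bullet> (x - d)"
proof -
  have a: "(\<Sum>k\<in>UNIV. x $ k * (g $ k - g \<bullet> d)) = (\<Sum>k\<in>UNIV. g $ k * x $ k) - (\<Sum>k\<in>UNIV. x $ k * (g \<bullet> d))"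
    by (simp add: algebra_simps sum_subtractf)
  have b: "(\<Sum>k\<in>UNIV. x $ k * (g \<bullet> d)) = g \<bullet> d"
    using assms by (simp add: sum_distrib_right[symmetric])
  have c: "(\<Sum>k\<in>UNIV. g $ k * x $ k) = g \<bullet> x" by (simp add: inner_vec_def)
  show ?thesis using a b c by (simp add: inner_diff_right)
qed

lemma beliefs_le1:
  assumes "x \<in> beliefs" shows "\<bar>x $ i\<bar> \<le> 1"
proof -
  have "x $ i \<le> (\<Sum>k\<in>UNIV. x $ k)"
    using assms by (intro member_le_sum) (auto simp: beliefs_def)
  then show ?thesis using assms by (auto simp: beliefs_def)
qed

lemma beliefs_compact: "compact (beliefs :: (real^'n::finite) set)"
proof (subst compact_eq_bounded_closed, intro conjI)
  have "norm x \<le> real CARD('n)" if "x \<in> beliefs" for x :: "real^'n"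
  proof -
    have le1: "\<bar>x $ i\<bar> \<le> 1" for i
    proof -
      have "x $ i \<le> (\<Sum>k\<in>UNIV. x $ k)"
        using that by (intro member_le_sum) (auto simp: beliefs_def)
      then show ?thesis using that by (auto simp: beliefs_def)
    qed
    have "norm x \<le> (\<Sum>i\<in>UNIV. \<bar>x $ i\<bar>)" by (rule norm_le_l1_cart)
    also have "\<dots> \<le> (\<Sum>i\<in>(UNIV::'n set). 1)" by (intro sum_mono le1)
    finally show ?thesis by simp
  qed
  then show "bounded (beliefs :: (real^'n) set)" unfolding bounded_iff by blast
  have "beliefs = (\<Inter>k. {x::real^'n. 0 \<le> x $ k}) \<inter> {x. (\<Sum>k\<in>UNIV. x $ k) = 1}"
    by (auto simp: beliefs_def)
  moreover have "closed \<dots>"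
    by (intro closed_Int closed_INT ballI closed_Collect_le closed_Collect_eq continuous_intros)
  ultimately show "closed (beliefs :: (real^'n) set)" by simp
qed

theorem lemma2:
  fixes \<mu> :: "real^'n::finite" and \<kappa> v0 :: real and c :: "real^'n \<Rightarrow> real"
    and v :: "real \<Rightarrow> real" and F :: "(real^'n) measure"
  assumes mu_simplex: "\<mu> \<in> beliefs" and mu_full: "\<forall>k. \<mu> $ k > 0"
    and kappa_pos: "\<kappa> > 0"
    and c_nonneg: "\<forall>x\<in>beliefs. c x \<ge> 0"
    and c_strict_convex: "strict_convex_on beliefs c"
    and c_cont: "continuous_on beliefs c"
    and c_C2: "\<exists>U. open U \<and> rel_interior beliefs \<subseteq> U \<and> C2_on c U"
    and c_bounded: "bounded (c ` rel_interior beliefs)"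
    and c_mu: "c \<mu> = 0"
    and v_mono: "strict_mono v"
    and v_C1: "\<exists>v'. (\<forall>y. (v has_real_derivative v' y) (at y)) \<and> continuous_on UNIV v'"
    and v_0: "v 0 = 0"
    and v_surj: "surj v"
    and v0_nonneg: "v0 \<ge> 0"
    and F_bp: "bayes_plausible \<mu> F"
    and F_fin: "finite (msupp F)" and F_card: "card (msupp F) \<le> CARD('n)"
    and F_int: "msupp F \<subseteq> rel_interior beliefs"
  shows "\<exists>M t. implements \<kappa> c v0 \<mu> M t F \<and>
           integrable F (\<lambda>x. \<Sum>k\<in>UNIV. x $ k * inv v (t x k))"
proof -
  obtain U where U: "open U" "rel_interior beliefs \<subseteq> U" "C2_on c U" using c_C2 by blast
  then obtain g :: "real^'n \<Rightarrow> real^'n" where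
    gder: "\<And>x. x \<in> U \<Longrightarrow> (c has_derivative (\<lambda>h. g x \<bullet> h)) (at x)"
    unfolding C2_on_def by blast
  define M where "M = msupp F"
  have Mfin: "finite M" using F_fin by (simp add: M_def)
  have MU: "M \<subseteq> U" using F_int U(2) by (auto simp: M_def)
  have Mb: "M \<subseteq> beliefs" using F_int rel_interior_subset by (auto simp: M_def)
  define t where "t x k = v0 + \<kappa> * c x + \<kappa> * (\<Sum>d\<in>M. indicator {d} x * (g d $ k - g d \<bullet> d))"
    for x :: "real^'n" and k
  have t_eq: "t x k = v0 + \<kappa> * c x + \<kappa> * (if x \<in> M then g x $ k - g x \<bullet> x else 0)" for x k
    unfolding t_def using sum_indicator_single[OF Mfin, of x "\<lambda>d. g d $ k - g d \<bullet> d"] by simp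
  have prob: "prob_space F" and setsF: "sets F = sets (restrict_space borel beliefs)"
    using F_bp by (auto simp: bayes_plausible_def)
  have spaceF: "space F = beliefs"
    using sets_eq_imp_space_eq[OF setsF] by (simp add: space_restrict_space)
  have key: "Npay \<kappa> c t x d = v0 + \<kappa> * c d + \<kappa> * (if d \<in> M then g d \<bullet> (x - d) else 0) - \<kappa> * c x"
    if x: "x \<in> beliefs" for x d
  proof -
    have s1: "(\<Sum>k\<in>UNIV. x $ k) = 1" using x by (simp add: beliefs_def)
    have "(\<Sum>k\<in>UNIV. x $ k * t d k) = (\<Sum>k\<in>UNIV. x $ k) * (v0 + \<kappa> * c d)
        + \<kappa> * (if d \<in> M then (\<Sum>k\<in>UNIV. x $ k * (g d $ k - g d \<bullet> d)) else 0)"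
      by (simp add: t_eq algebra_simps sum.distrib sum_distrib_left sum_distrib_right)
    also have "\<dots> = v0 + \<kappa> * c d + \<kappa> * (if d \<in> M then g d \<bullet> (x - d) else 0)"
      using s1 lin_sum[OF s1] by simp
    finally show ?thesis by (simp add: Npay_def)
  qed
  have Nxx: "Npay \<kappa> c t x x = v0" if "x \<in> beliefs" for x
    using key[OF that, of x] by simp
  have Nle: "Npay \<kappa> c t x d \<le> v0" if x: "x \<in> beliefs" and d: "d \<in> M" for x d
  proof -
    have "c d + g d \<bullet> (x - d) \<le> c x"
      using tangent_ineq[OF c_strict_convex x _ gder] d Mb MU by auto
    then have "\<kappa> * (c d + g d \<bullet> (x - d)) \<le> \<kappa> * c x"
      using kappa_pos by (simp add: mult_left_mono)
    then show ?thesis using key[OF x, of d] d by (simp add: algebra_simps)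
  qed
  have post_le: "post_payoff \<kappa> c v0 t \<sigma> x \<le> v0"
    if x: "x \<in> beliefs" and s: "set_pmf (\<sigma> x) \<subseteq> insert None (Some ` M)" for \<sigma> x
  proof -
    let ?f = "\<lambda>a. case a of None \<Rightarrow> v0 - \<kappa> * c x | Some d \<Rightarrow> Npay \<kappa> c t x d"
    have fin: "finite (set_pmf (\<sigma> x))" by (rule finite_subset[OF s]) (simp add: Mfin)
    have "measure_pmf.expectation (\<sigma> x) ?f \<le> measure_pmf.expectation (\<sigma> x) (\<lambda>_. v0)"
    proof (rule integral_mono_AE)
      show "integrable (measure_pmf (\<sigma> x)) ?f" by (rule integrable_measure_pmf_finite[OF fin])
      show "integrable (measure_pmf (\<sigma> x)) (\<lambda>_. v0)" by (rule integrable_measure_pmf_finite[OF fin])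
      show "AE a in measure_pmf (\<sigma> x). ?f a \<le> v0"
        unfolding AE_measure_pmf_iff
      proof
        fix a assume "a \<in> set_pmf (\<sigma> x)"
        then have "a \<in> insert None (Some ` M)" using s by blast
        then show "?f a \<le> v0"
          using Nle[OF x] c_nonneg x kappa_pos by auto
      qed
    qed
    also have "\<dots> = v0" by (simp add: measure_pmf.prob_space)
    finally show ?thesis by (simp add: post_payoff_def)
  qed
  have intN: "integrable F (\<lambda>x. Npay \<kappa> c t x x)"
  proof -
    have "integrable F (\<lambda>x. v0)"
      using prob by (simp add: prob_space.finite_measure finite_measure.integrable_const)
    moreover have "integrable F (\<lambda>x. Npay \<kappa> c t x x) \<longleftrightarrow> integrable F (\<lambda>x. v0)"
      by (intro Bochner_Integration.integrable_cong) (auto simp: spaceF Nxx)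
    ultimately show ?thesis by simp
  qed
  have intNv: "(\<integral>x. Npay \<kappa> c t x x \<partial>F) = v0"
  proof -
    have "(\<integral>x. Npay \<kappa> c t x x \<partial>F) = (\<integral>x. v0 \<partial>F)"
      by (rule Bochner_Integration.integral_cong) (auto simp: spaceF Nxx)
    also have "\<dots> = v0" using prob by (simp add: prob_space.prob_space)
    finally show ?thesis .
  qed
  have impl: "implements \<kappa> c v0 \<mu> M t F"
    unfolding implements_def
  proof (intro conjI allI impI)
    show "M = msupp F" by (simp add: M_def)
    show "compact M" using Mfin by (rule finite_imp_compact)
    show "bayes_plausible \<mu> F" by (rule F_bp)
    show "integrable F (\<lambda>x. Npay \<kappa> c t x x)" by (rule intN)
    show "v0 \<le> (\<integral>x. Npay \<kappa> c t x x \<partial>F)" by (simp add: intNv)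
    fix G \<sigma>
    assume asm: "bayes_plausible \<mu> G \<and>
        (\<forall>x\<in>space G. set_pmf (\<sigma> x) \<subseteq> insert None (Some ` M)) \<and>
        integrable G (post_payoff \<kappa> c v0 t \<sigma>)"
    have probG: "prob_space G" and setsG: "sets G = sets (restrict_space borel beliefs)"
      using asm by (auto simp: bayes_plausible_def)
    have spaceG: "space G = beliefs"
      using sets_eq_imp_space_eq[OF setsG] by (simp add: space_restrict_space)
    have "(\<integral>x. post_payoff \<kappa> c v0 t \<sigma> x \<partial>G) \<le> (\<integral>x. v0 \<partial>G)"
    proof (rule integral_mono)
      show "integrable G (post_payoff \<kappa> c v0 t \<sigma>)" using asm by blast
      show "integrable G (\<lambda>x. v0)"
        using probG by (simp add: prob_space.finite_measure finite_measure.integrable_const)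
      fix x assume "x \<in> space G"
      then show "post_payoff \<kappa> c v0 t \<sigma> x \<le> v0"
        using post_le asm spaceG by auto
    qed
    also have "\<dots> = v0" using probG by (simp add: prob_space.prob_space)
    finally show "(\<integral>x. post_payoff \<kappa> c v0 t \<sigma> x \<partial>G) \<le> (\<integral>x. Npay \<kappa> c t x x \<partial>F)"
      by (simp add: intNv)
  qed
  have intC: "integrable F (\<lambda>x. \<Sum>k\<in>UNIV. x $ k * inv v (t x k))"
  proof -
    have invv: "inv v a \<le> inv v b" if "a \<le> b" for a b
    proof (rule ccontr)
      assume "\<not> inv v a \<le> inv v b"
      then have "v (inv v b) < v (inv v a)" using v_mono by (simp add: strict_mono_less)
      then show False using that v_surj by (simp add: surj_f_inv_f)
    qed
    then have "mono (inv v)" by (simp add: monoI)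
    then have invm[measurable]: "inv v \<in> borel_measurable borel" by (rule borel_measurable_mono)
    have cm[measurable]: "c \<in> borel_measurable (restrict_space borel beliefs)"
      by (rule borel_measurable_continuous_on_restrict[OF c_cont])
    have "(\<lambda>x. \<Sum>k\<in>UNIV. x $ k * inv v (t x k)) \<in> borel_measurable (restrict_space borel beliefs)"
    proof -
      have nth[measurable]: "(\<lambda>x::real^'n. x $ k) \<in> borel_measurable (restrict_space borel beliefs)" for k
        by (intro borel_measurable_continuous_on_restrict continuous_intros)
      have ind[measurable]: "(\<lambda>x::real^'n. indicator {d} x :: real) \<in> borel_measurable (restrict_space borel beliefs)" for d
        by (intro measurable_restrict_space1 borel_measurable_indicator) simp
      have tm: "(\<lambda>x. t x k) \<in> borel_measurable (restrict_space borel beliefs)" for k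
        unfolding t_def by measurable
      have "(\<lambda>x. inv v (t x k)) \<in> borel_measurable (restrict_space borel beliefs)" for k
        using measurable_compose[OF tm invm] by (simp add: o_def)
      then show ?thesis by (intro borel_measurable_sum borel_measurable_times nth)
    qed
    note mf = this
    have meas: "(\<lambda>x. \<Sum>k\<in>UNIV. x $ k * inv v (t x k)) \<in> borel_measurable F"
      by (subst measurable_cong_sets[OF setsF refl]) (rule mf)
    have "compact (c ` beliefs)"
      by (rule compact_continuous_image[OF c_cont beliefs_compact])
    then have "bounded (c ` beliefs)" by (rule compact_imp_bounded)
    then obtain Bc where "\<forall>y\<in>c ` beliefs. norm y \<le> Bc" unfolding bounded_iff by blast
    then have Bc: "\<And>x. x \<in> beliefs \<Longrightarrow> \<bar>c x\<bar> \<le> Bc" by auto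
    define Bg where "Bg = (\<Sum>d\<in>M. \<Sum>k\<in>UNIV. \<bar>g d $ k - g d \<bullet> d\<bar>)"
    have Bg: "\<bar>if x \<in> M then g x $ k - g x \<bullet> x else 0\<bar> \<le> Bg" for x k
    proof (cases "x \<in> M")
      case True
      have "\<bar>g x $ k - g x \<bullet> x\<bar> \<le> (\<Sum>k\<in>UNIV. \<bar>g x $ k - g x \<bullet> x\<bar>)"
        by (rule member_le_sum) auto
      also have "\<dots> \<le> Bg" unfolding Bg_def
        by (rule member_le_sum[of x M "\<lambda>d. \<Sum>k\<in>UNIV. \<bar>g d $ k - g d \<bullet> d\<bar>"]) (auto simp: True Mfin intro: sum_nonneg)
      finally show ?thesis using True by simp
    next
      case False
      have "0 \<le> Bg" unfolding Bg_def by (intro sum_nonneg) auto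
      then show ?thesis using False by simp
    qed
    define B where "B = \<bar>v0\<bar> + \<kappa> * Bc + \<kappa> * Bg"
    have tB: "\<bar>t x k\<bar> \<le> B" if "x \<in> beliefs" for x k
    proof -
      have "\<bar>\<kappa> * c x\<bar> \<le> \<kappa> * Bc" using Bc[OF that] kappa_pos by (simp add: abs_mult)
      moreover have "\<bar>\<kappa> * (if x \<in> M then g x $ k - g x \<bullet> x else 0)\<bar> \<le> \<kappa> * Bg"
        using Bg[of x k] kappa_pos by (simp add: abs_mult del: abs_if)
      ultimately show ?thesis unfolding t_eq B_def by linarith
    qed
    define C where "C = \<bar>inv v B\<bar> + \<bar>inv v (- B)\<bar>"
    have iB: "\<bar>inv v (t x k)\<bar> \<le> C" if "x \<in> beliefs" for x k
    proof -
      have "inv v (- B) \<le> inv v (t x k)" "inv v (t x k) \<le> inv v B"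
        using tB[OF that, of k] by (auto intro!: invv)
      then show ?thesis unfolding C_def by linarith
    qed
    have bnd: "norm (\<Sum>k\<in>UNIV. x $ k * inv v (t x k)) \<le> real CARD('n) * C"
      if "x \<in> beliefs" for x
    proof -
      have "norm (\<Sum>k\<in>UNIV. x $ k * inv v (t x k)) \<le> (\<Sum>k\<in>UNIV. \<bar>x $ k * inv v (t x k)\<bar>)"
        by (simp add: sum_abs)
      also have "\<dots> \<le> (\<Sum>k\<in>(UNIV::'n set). C)"
      proof (rule sum_mono)
        fix k
        have "\<bar>x $ k\<bar> * \<bar>inv v (t x k)\<bar> \<le> 1 * C"
          by (rule mult_mono[OF beliefs_le1[OF that] iB[OF that]]) auto
        then show "\<bar>x $ k * inv v (t x k)\<bar> \<le> C" by (simp add: abs_mult)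
      qed
      finally show ?thesis by simp
    qed
    show ?thesis
    proof (rule finite_measure.integrable_const_bound[OF prob_space.finite_measure[OF prob]])
      show "AE x in F. norm (\<Sum>k\<in>UNIV. x $ k * inv v (t x k)) \<le> real CARD('n) * C"
        using bnd by (intro AE_I2) (simp add: spaceF)
      show "(\<lambda>x. \<Sum>k\<in>UNIV. x $ k * inv v (t x k)) \<in> borel_measurable F" by (rule meas)
    qed
  qed
  show ?thesis using impl intC by blast
qed
end
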